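(* Let $L$ be a weak Noetherian C-lattice. Then $L$ is sharp if and only if every element of $L$ is principal.
   Context: A multiplicative lattice is a complete lattice $(L,\le)$ with bottom $0$ and top $1$ which is also a commutative monoid with identity $1$ such that $a(\bigvee_\alpha b_\alpha)=\bigvee_\alpha(ab_\alpha)$ for all $a,b_\alpha\in L$. For $x,y\in L$, $(y:x)=\bigvee\{a\in L: ax\le y\}$. An element $c$ is compact if $c\le\bigvee S$ implies $c\le\bigvee T$ for some finite $T\subseteq S$. A C-lattice is a multiplicative lattice in which $1$ is compact, the product of two compact elements is compact, and every element is a join of compact elements. An element $x$ is meet principal if $y\wedge zx=((y:x)\wedge z)x$ for all $y,z\in L$; join principal if $y\vee(z:x)=((yx\vee z):x)$ for all $y,z\in L$; principal if both. $L$ is weak Noetherian if every element is a join of principal elements and every element of $L$ is compact. $L$ is sharp if whenever $a_1a_2\le b$ with $a_1,a_2,b\in L$, there exist $b_1,b_2\in L$ with $a_i\le b_i$ ($i=1,2$) and $b=b_1b_2$. *)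

theory Defs
  imports Main
begin

definition mult_lattice :: "('a::complete_lattice \<Rightarrow> 'a \<Rightarrow> 'a) \<Rightarrow> bool" where
  "mult_lattice m \<longleftrightarrow>
     (\<forall>a b. m a b = m b a) \<and>
     (\<forall>a b c. m (m a b) c = m a (m b c)) \<and>
     (\<forall>a. m a top = a) \<and>
     (\<forall>a B. m a (Sup B) = Sup ((\<lambda>b. m a b) ` B))"

definition colon :: "('a::complete_lattice \<Rightarrow> 'a \<Rightarrow> 'a) \<Rightarrow> 'a \<Rightarrow> 'a \<Rightarrow> 'a" where
  "colon m y x = Sup {a. m a x \<le> y}"

definition compact_el :: "'a::complete_lattice \<Rightarrow> bool" where
  "compact_el c \<longleftrightarrow> (\<forall>S. c \<le> Sup S \<longrightarrow> (\<exists>T. T \<subseteq> S \<and> finite T \<and> c \<le> Sup T))"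

definition C_lattice :: "('a::complete_lattice \<Rightarrow> 'a \<Rightarrow> 'a) \<Rightarrow> bool" where
  "C_lattice m \<longleftrightarrow> mult_lattice m \<and> compact_el (top::'a) \<and>
     (\<forall>a b. compact_el a \<and> compact_el b \<longrightarrow> compact_el (m a b)) \<and>
     (\<forall>x::'a. \<exists>S. (\<forall>c\<in>S. compact_el c) \<and> x = Sup S)"

definition meet_principal :: "('a::complete_lattice \<Rightarrow> 'a \<Rightarrow> 'a) \<Rightarrow> 'a \<Rightarrow> bool" where
  "meet_principal m x \<longleftrightarrow> (\<forall>y z. inf y (m z x) = m (inf (colon m y x) z) x)"

definition join_principal :: "('a::complete_lattice \<Rightarrow> 'a \<Rightarrow> 'a) \<Rightarrow> 'a \<Rightarrow> bool" where
  "join_principal m x \<longleftrightarrow> (\<forall>y z. sup y (colon m z x) = colon m (sup (m y x) z) x)"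

definition principal :: "('a::complete_lattice \<Rightarrow> 'a \<Rightarrow> 'a) \<Rightarrow> 'a \<Rightarrow> bool" where
  "principal m x \<longleftrightarrow> meet_principal m x \<and> join_principal m x"

definition weak_noetherian :: "('a::complete_lattice \<Rightarrow> 'a \<Rightarrow> 'a) \<Rightarrow> bool" where
  "weak_noetherian m \<longleftrightarrow>
     (\<forall>x::'a. \<exists>S. (\<forall>p\<in>S. principal m p) \<and> x = Sup S) \<and>
     (\<forall>x::'a. compact_el x)"

definition sharp :: "('a::complete_lattice \<Rightarrow> 'a \<Rightarrow> 'a) \<Rightarrow> bool" where
  "sharp m \<longleftrightarrow> (\<forall>a1 a2 b. m a1 a2 \<le> b \<longrightarrow>
      (\<exists>b1 b2. a1 \<le> b1 \<and> a2 \<le> b2 \<and> b = m b1 b2))"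

end

theory Submission
  imports Defs
begin


locale mlat =
  fixes m :: "'a::complete_lattice \<Rightarrow> 'a \<Rightarrow> 'a" (infixl "\<cdot>" 70)
  assumes ml: "mult_lattice m"
begin

lemma comm: "a \<cdot> b = b \<cdot> a" using ml unfolding mult_lattice_def by blast
lemma assoc: "a \<cdot> b \<cdot> c = a \<cdot> (b \<cdot> c)" using ml unfolding mult_lattice_def by blast
lemma unit_r: "a \<cdot> top = a" using ml unfolding mult_lattice_def by blast
lemma unit_l: "top \<cdot> a = a" by (metis comm unit_r)
lemma Sup_distr: "a \<cdot> Sup B = Sup ((\<lambda>b. a \<cdot> b) ` B)" using ml unfolding mult_lattice_def by blast
lemma sup_distr: "a \<cdot> sup b c = sup (a \<cdot> b) (a \<cdot> c)" using Sup_distr[of a "{b,c}"] by simp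
lemma sup_distl: "sup b c \<cdot> a = sup (b \<cdot> a) (c \<cdot> a)" by (metis comm sup_distr)
lemma bot_r: "a \<cdot> bot = bot" using Sup_distr[of a "{}"] by simp
lemma bot_l: "bot \<cdot> a = bot" by (metis comm bot_r)
lemma mono_r: assumes "b \<le> c" shows "a \<cdot> b \<le> a \<cdot> c"
proof -
  have "a \<cdot> c = sup (a \<cdot> b) (a \<cdot> c)" using sup_distr[of a b c] assms by (metis sup.absorb2)
  thus ?thesis by (metis sup.cobounded1)
qed
lemma mono_l: "b \<le> c \<Longrightarrow> b \<cdot> a \<le> c \<cdot> a" by (metis comm mono_r)
lemma mono2: "a \<le> b \<Longrightarrow> c \<le> d \<Longrightarrow> a \<cdot> c \<le> b \<cdot> d" by (meson mono_l mono_r order_trans)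
lemma le_l: "a \<cdot> b \<le> a" using mono_r[of b top a] unit_r by simp
lemma le_r: "a \<cdot> b \<le> b" by (metis comm le_l)

lemma colon_mult: "colon m y x \<cdot> x \<le> y"
proof -
  have "colon m y x \<cdot> x = x \<cdot> Sup {a. a \<cdot> x \<le> y}" by (simp add: colon_def comm)
  also have "\<dots> = Sup ((\<lambda>a. x \<cdot> a) ` {a. a \<cdot> x \<le> y})" by (rule Sup_distr)
  also have "\<dots> \<le> y" by (auto intro!: Sup_least simp: comm)
  finally show ?thesis .
qed
lemma colon_ge: "a \<cdot> x \<le> y \<Longrightarrow> a \<le> colon m y x" unfolding colon_def by (auto intro: Sup_upper)
lemma colon_iff: "a \<le> colon m y x \<longleftrightarrow> a \<cdot> x \<le> y"
  by (meson colon_ge colon_mult mono_l order_trans)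

lemma wmp: "principal m r \<Longrightarrow> inf y r = colon m y r \<cdot> r"
  unfolding principal_def meet_principal_def by (metis inf_top.right_neutral unit_l)
lemma jp: "principal m r \<Longrightarrow> colon m (sup (y \<cdot> r) z) r = sup y (colon m z r)"
  unfolding principal_def join_principal_def by metis
lemma principal_bot: "principal m bot"
  unfolding principal_def meet_principal_def join_principal_def
proof (intro conjI allI)
  fix y z :: 'a
  show "inf y (z \<cdot> bot) = inf (colon m y bot) z \<cdot> bot" by (simp add: bot_r)
  have t: "colon m w bot = top" for w using colon_ge[of top bot w] by (simp add: bot_r top_le)
  show "sup y (colon m z bot) = colon m (sup (y \<cdot> bot) z) bot" by (simp add: t)
qed

definition maxel :: "'a \<Rightarrow> bool" where "maxel M \<longleftrightarrow> M \<noteq> top \<and> (\<forall>y. M \<le> y \<longrightarrow> y = M \<or> y = top)"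
definition lle :: "'a \<Rightarrow> 'a \<Rightarrow> 'a \<Rightarrow> bool" where "lle M u v \<longleftrightarrow> (\<exists>s. \<not> s \<le> M \<and> s \<cdot> u \<le> v)"

lemma maxel_prime: assumes "maxel M" "a \<cdot> b \<le> M" shows "a \<le> M \<or> b \<le> M"
proof (rule ccontr)
  assume "\<not> (a \<le> M \<or> b \<le> M)"
  hence na: "\<not> a \<le> M" and nb: "\<not> b \<le> M" by auto
  have "sup a M \<noteq> M" using na by (metis sup.cobounded1)
  hence "sup a M = top" using assms(1) unfolding maxel_def by (metis sup.cobounded2)
  hence "b = sup (b \<cdot> a) (b \<cdot> M)" by (metis sup_distr unit_r)
  also have "\<dots> \<le> M" using assms(2) by (simp add: comm le_l)
  finally show False using nb by simp
qed

lemma maxel_top: "maxel M \<Longrightarrow> \<not> top \<le> M" unfolding maxel_def using top_le by blast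

lemma lle_le: "maxel M \<Longrightarrow> u \<le> v \<Longrightarrow> lle M u v"
  unfolding lle_def using maxel_top unit_l by metis

lemma lle_trans: assumes "maxel M" "lle M u v" "lle M v w" shows "lle M u w"
proof -
  obtain s t where s: "\<not> s \<le> M" "s \<cdot> u \<le> v" and t: "\<not> t \<le> M" "t \<cdot> v \<le> w"
    using assms unfolding lle_def by blast
  have "\<not> t \<cdot> s \<le> M" using maxel_prime[OF assms(1)] s t by blast
  moreover have "t \<cdot> s \<cdot> u \<le> w" by (metis assoc mono_r order_trans s(2) t(2))
  ultimately show ?thesis unfolding lle_def by blast
qed

lemma lle_sup: assumes "maxel M" "lle M u w" "lle M v w" shows "lle M (sup u v) w"
proof -
  obtain s t where s: "\<not> s \<le> M" "s \<cdot> u \<le> w" and t: "\<not> t \<le> M" "t \<cdot> v \<le> w"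
    using assms unfolding lle_def by blast
  have "\<not> s \<cdot> t \<le> M" using maxel_prime[OF assms(1)] s t by blast
  moreover have "s \<cdot> t \<cdot> u \<le> w" by (metis assoc comm le_r order_trans s(2))
  moreover have "s \<cdot> t \<cdot> v \<le> w" by (metis assoc le_r order_trans t(2))
  ultimately show ?thesis unfolding lle_def by (metis sup_distr sup_least)
qed

lemma lle_mult: "lle M u v \<Longrightarrow> lle M (a \<cdot> u) (a \<cdot> v)"
  unfolding lle_def by (metis assoc comm mono_r)

end


context mlat begin

lemma lle_colon: "lle M u v \<Longrightarrow> \<not> colon m v u \<le> M"
  unfolding lle_def by (meson colon_ge order_trans)

lemma local_step_meet:
  assumes "maxel M" "principal m p" "p \<le> x" "\<not> e \<le> M" "e \<cdot> x \<le> p"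
  shows "lle M (inf y (z \<cdot> x)) (inf (colon m y x) z \<cdot> x)"
proof -
  let ?w = "inf y (z \<cdot> x)" let ?t = "inf (colon m y p) z"
  have "e \<cdot> ?w \<le> y" by (meson inf.cobounded1 le_r order_trans)
  moreover have "e \<cdot> ?w \<le> z \<cdot> p"
  proof -
    have "e \<cdot> ?w \<le> e \<cdot> (z \<cdot> x)" by (simp add: mono_r)
    also have "\<dots> = z \<cdot> (e \<cdot> x)" by (metis assoc comm)
    also have "\<dots> \<le> z \<cdot> p" using assms(5) by (simp add: mono_r)
    finally show ?thesis .
  qed
  ultimately have "e \<cdot> ?w \<le> inf y (z \<cdot> p)" by simp
  also have "\<dots> = ?t \<cdot> p" using assms(2) unfolding principal_def meet_principal_def by blast
  finally have 1: "e \<cdot> ?w \<le> ?t \<cdot> p" .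
  have 2: "e \<cdot> (e \<cdot> ?w) \<le> (e \<cdot> ?t) \<cdot> x"
  proof -
    have "e \<cdot> (e \<cdot> ?w) \<le> e \<cdot> (?t \<cdot> p)" using 1 by (simp add: mono_r)
    also have "\<dots> \<le> e \<cdot> (?t \<cdot> x)" using assms(3) by (simp add: mono_r)
    finally show ?thesis by (simp add: assoc)
  qed
  have 3: "e \<cdot> ?t \<le> inf (colon m y x) z"
  proof -
    have "e \<cdot> ?t \<le> z" by (meson inf.cobounded2 le_r order_trans)
    moreover have "(e \<cdot> ?t) \<cdot> x \<le> y"
    proof -
      have "(e \<cdot> ?t) \<cdot> x = ?t \<cdot> (e \<cdot> x)" by (metis assoc comm)
      also have "\<dots> \<le> ?t \<cdot> p" using assms(5) by (simp add: mono_r)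
      also have "\<dots> \<le> colon m y p \<cdot> p" by (simp add: mono_l)
      also have "\<dots> \<le> y" by (rule colon_mult)
      finally show ?thesis .
    qed
    ultimately show ?thesis by (simp add: colon_iff)
  qed
  have "(e \<cdot> e) \<cdot> ?w \<le> inf (colon m y x) z \<cdot> x"
    using 2 3 by (metis assoc mono_l order_trans)
  moreover have "\<not> e \<cdot> e \<le> M" using maxel_prime[OF assms(1)] assms(4) by blast
  ultimately show ?thesis unfolding lle_def by blast
qed

lemma local_step_join:
  assumes "maxel M" "principal m p" "p \<le> x" "\<not> e \<le> M" "e \<cdot> x \<le> p"
  shows "lle M (colon m (sup (y \<cdot> x) z) x) (sup y (colon m z x))"
proof -
  let ?w = "colon m (sup (y \<cdot> x) z) x"
  have "(e \<cdot> ?w) \<cdot> p \<le> sup (y \<cdot> p) z"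
  proof -
    have "(e \<cdot> ?w) \<cdot> p \<le> (e \<cdot> ?w) \<cdot> x" using assms(3) by (simp add: mono_r)
    also have "\<dots> = e \<cdot> (?w \<cdot> x)" by (simp add: assoc)
    also have "\<dots> \<le> e \<cdot> sup (y \<cdot> x) z" by (simp add: mono_r colon_mult)
    also have "\<dots> = sup (y \<cdot> (e \<cdot> x)) (e \<cdot> z)" by (metis sup_distr assoc comm)
    also have "\<dots> \<le> sup (y \<cdot> p) z" using assms(5) by (simp add: mono_r le_r sup.coboundedI1 sup.coboundedI2)
    finally show ?thesis .
  qed
  hence "e \<cdot> ?w \<le> colon m (sup (y \<cdot> p) z) p" by (simp add: colon_iff)
  also have "\<dots> = sup y (colon m z p)" using jp[OF assms(2)] .
  finally have 1: "e \<cdot> ?w \<le> sup y (colon m z p)" .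
  have 2: "e \<cdot> colon m z p \<le> colon m z x"
  proof -
    have "(e \<cdot> colon m z p) \<cdot> x = colon m z p \<cdot> (e \<cdot> x)" by (metis assoc comm)
    also have "\<dots> \<le> colon m z p \<cdot> p" using assms(5) by (simp add: mono_r)
    also have "\<dots> \<le> z" by (rule colon_mult)
    finally show ?thesis by (simp add: colon_iff)
  qed
  have "(e \<cdot> e) \<cdot> ?w \<le> sup y (colon m z x)"
  proof -
    have "(e \<cdot> e) \<cdot> ?w \<le> e \<cdot> sup y (colon m z p)" using 1 by (simp add: assoc mono_r)
    also have "\<dots> = sup (e \<cdot> y) (e \<cdot> colon m z p)" by (rule sup_distr)
    also have "\<dots> \<le> sup y (colon m z x)" using 2 by (simp add: le_r sup.coboundedI1 sup.coboundedI2)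
    finally show ?thesis .
  qed
  moreover have "\<not> e \<cdot> e \<le> M" using maxel_prime[OF assms(1)] assms(4) by blast
  ultimately show ?thesis unfolding lle_def by blast
qed

end

locale wnl = mlat +
  assumes wn: "weak_noetherian m"
begin

lemma compact: "compact_el (x::'a)" using wn unfolding weak_noetherian_def by blast

lemma fin_dec: "\<exists>F::'a set. finite F \<and> (\<forall>p\<in>F. principal m p) \<and> x = Sup F"
proof -
  obtain S where S: "\<forall>p\<in>S. principal m p" "x = Sup S" using wn unfolding weak_noetherian_def by blast
  then obtain T where T: "T \<subseteq> S" "finite T" "x \<le> Sup T" using compact[of x] unfolding compact_el_def by blast
  have "Sup T \<le> x" using T(1) S(2) by (simp add: Sup_subset_mono)
  thus ?thesis using T S by (intro exI[of _ T]) auto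
qed

lemma acc: fixes f :: "nat \<Rightarrow> 'a" assumes "\<And>n. f n \<le> f (Suc n)" shows "\<exists>N. f (Suc N) \<le> f N"
proof -
  obtain T where T: "T \<subseteq> range f" "finite T" "Sup (range f) \<le> Sup T"
    using compact[of "Sup (range f)"] unfolding compact_el_def by blast
  obtain I where I: "finite I" "T = f ` I" using finite_subset_image[OF T(2) T(1)] by blast
  let ?N = "Max (insert 0 I)"
  have "Sup T \<le> f ?N"
  proof (rule Sup_least)
    fix t assume "t \<in> T"
    then obtain i where "i \<in> I" "t = f i" using I by blast
    moreover have "i \<le> ?N" using `i \<in> I` I(1) by simp
    ultimately show "t \<le> f ?N" using lift_Suc_mono_le[of f, OF assms] by blast
  qed
  moreover have "f (Suc ?N) \<le> Sup (range f)" by (simp add: Sup_upper)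
  ultimately show ?thesis using T(3) by (meson order_trans)
qed

lemma has_max: fixes S :: "'a set" assumes "S \<noteq> {}" shows "\<exists>y\<in>S. \<forall>z\<in>S. y \<le> z \<longrightarrow> z = y"
proof (rule ccontr)
  assume "\<not> ?thesis"
  hence "\<forall>y\<in>S. \<exists>z. z \<in> S \<and> y < z" by (metis less_le)
  then obtain g where g: "\<And>y. y \<in> S \<Longrightarrow> g y \<in> S \<and> y < g y" by metis
  obtain y0 where y0: "y0 \<in> S" using assms by blast
  define f where "f n = (g ^^ n) y0" for n
  have fS: "f n \<in> S" for n by (induction n) (auto simp: f_def y0 g)
  have fs: "f n < f (Suc n)" for n using g[OF fS[of n]] by (simp add: f_def)
  obtain N where "f (Suc N) \<le> f N" using acc[of f] fs by (meson less_imp_le)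
  thus False using fs[of N] by simp
qed

lemma exists_maxel: assumes "c \<noteq> top" shows "\<exists>M. maxel M \<and> c \<le> M"
proof -
  obtain M where M: "M \<in> {y. c \<le> y \<and> y \<noteq> top}" "\<forall>z\<in>{y. c \<le> y \<and> y \<noteq> top}. M \<le> z \<longrightarrow> z = M"
    using has_max[of "{y. c \<le> y \<and> y \<noteq> top}"] assms by blast
  have "maxel M" unfolding maxel_def using M by (auto intro: order_trans)
  thus ?thesis using M by blast
qed

lemma le_local: assumes "\<And>M. maxel M \<Longrightarrow> lle M u v" shows "u \<le> v"
proof -
  have "colon m v u = top"
  proof (rule ccontr)
    assume "colon m v u \<noteq> top"
    then obtain M where "maxel M" "colon m v u \<le> M" using exists_maxel by blast
    thus False using assms lle_colon by blast
  qed
  thus ?thesis using colon_mult[of v u] unit_l by simp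
qed

lemma local_global:
  assumes "\<And>M. maxel M \<Longrightarrow> \<exists>p. principal m p \<and> p \<le> x \<and> lle M x p"
  shows "principal m x"
  unfolding principal_def meet_principal_def join_principal_def
proof (intro conjI allI)
  fix y z
  have "inf y (z \<cdot> x) \<le> inf (colon m y x) z \<cdot> x"
  proof (rule le_local)
    fix M assume M: "maxel M"
    then obtain p s where "principal m p" "p \<le> x" "\<not> s \<le> M" "s \<cdot> x \<le> p"
      using assms unfolding lle_def by blast
    thus "lle M (inf y (z \<cdot> x)) (inf (colon m y x) z \<cdot> x)" using local_step_meet M by blast
  qed
  moreover have "inf (colon m y x) z \<cdot> x \<le> inf y (z \<cdot> x)"
  proof (rule le_infI)
    have "inf (colon m y x) z \<cdot> x \<le> colon m y x \<cdot> x" by (rule mono_l) simp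
    also have "\<dots> \<le> y" by (rule colon_mult)
    finally show "inf (colon m y x) z \<cdot> x \<le> y" .
    show "inf (colon m y x) z \<cdot> x \<le> z \<cdot> x" by (rule mono_l) simp
  qed
  ultimately show "inf y (z \<cdot> x) = inf (colon m y x) z \<cdot> x" by (rule antisym)
next
  fix y z
  have "colon m (sup (y \<cdot> x) z) x \<le> sup y (colon m z x)"
  proof (rule le_local)
    fix M assume M: "maxel M"
    then obtain p s where "principal m p" "p \<le> x" "\<not> s \<le> M" "s \<cdot> x \<le> p"
      using assms unfolding lle_def by blast
    thus "lle M (colon m (sup (y \<cdot> x) z) x) (sup y (colon m z x))" using local_step_join M by blast
  qed
  moreover have "sup y (colon m z x) \<le> colon m (sup (y \<cdot> x) z) x"
    by (meson colon_iff colon_mult le_supI le_supI1 le_supI2 order_refl)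
  ultimately show "sup y (colon m z x) = colon m (sup (y \<cdot> x) z) x" by (blast intro: order.antisym)
qed

end


context mlat begin

definition pw :: "'a \<Rightarrow> nat \<Rightarrow> 'a" where "pw r k = ((\<lambda>x. r \<cdot> x) ^^ k) top"

lemma pw_0: "pw r 0 = top" by (simp add: pw_def)
lemma pw_Suc: "pw r (Suc k) = r \<cdot> pw r k" by (simp add: pw_def)
lemma pw_anti: "j \<le> k \<Longrightarrow> pw r k \<le> pw r j"
proof (induction k)
  case 0 thus ?case by simp
next
  case (Suc k)
  show ?case
  proof (cases "j = Suc k")
    case False
    hence "pw r k \<le> pw r j" using Suc by simp
    thus ?thesis by (metis pw_Suc le_r order_trans)
  qed simp
qed

lemma sharp_all_principal: assumes "\<forall>x. principal m x" shows "sharp m"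
  unfolding sharp_def
proof (intro allI impI)
  fix a1 a2 b assume h: "a1 \<cdot> a2 \<le> b"
  let ?b2 = "sup b a2" let ?b1 = "colon m b ?b2"
  have "a1 \<cdot> ?b2 \<le> b" using h by (simp add: sup_distr le_r)
  hence "a1 \<le> ?b1" by (simp add: colon_iff)
  moreover have "b = ?b1 \<cdot> ?b2" using wmp[of ?b2 b] assms by (simp add: inf_absorb1)
  moreover have "a2 \<le> ?b2" by simp
  ultimately show "\<exists>b1 b2. a1 \<le> b1 \<and> a2 \<le> b2 \<and> b = b1 \<cdot> b2" by (intro exI[of _ ?b1] exI[of _ ?b2]) blast
qed

lemma lle_colon_intro: "\<not> colon m v u \<le> M \<Longrightarrow> lle M u v"
  unfolding lle_def using colon_mult by blast

end

context wnl begin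

lemma GN:
  assumes M: "maxel M" and "finite F" "\<forall>p\<in>F. principal m p"
    "lle M (Sup F) (sup z (M \<cdot> Sup F))"
  shows "lle M (Sup F) z"
  using assms(2,3,4)
proof (induction F rule: finite_induct)
  case empty thus ?case using lle_le[OF M] by simp
next
  case (insert r F)
  let ?y = "Sup F" let ?w = "sup z (M \<cdot> ?y)"
  have pr: "principal m r" using insert by simp
  have hyp: "lle M (sup r ?y) (sup (M \<cdot> r) ?w)"
  proof -
    have "sup z (M \<cdot> Sup (insert r F)) = sup (M \<cdot> r) ?w"
      by (simp add: sup_distr sup_assoc sup_left_commute)
    thus ?thesis using insert(5) by simp
  qed
  have a: "lle M r ?w"
  proof -
    have "lle M r (sup (M \<cdot> r) ?w)" using lle_trans[OF M lle_le[OF M] hyp] by simp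
    then obtain s where s: "\<not> s \<le> M" "s \<cdot> r \<le> sup (M \<cdot> r) ?w" unfolding lle_def by blast
    hence "s \<le> colon m (sup (M \<cdot> r) ?w) r" by (simp add: colon_iff)
    also have "\<dots> = sup M (colon m ?w r)" by (rule jp[OF pr])
    finally have "s \<le> sup M (colon m ?w r)" .
    hence "\<not> colon m ?w r \<le> M" using s(1) by (metis sup.absorb1)
    thus ?thesis by (rule lle_colon_intro)
  qed
  have mw: "M \<cdot> ?w \<le> ?w" by (simp add: sup_distr le_r sup.coboundedI1 sup.coboundedI2)
  have b: "lle M ?y z"
  proof -
    have "lle M ?y (sup (M \<cdot> r) ?w)" using lle_trans[OF M lle_le[OF M] hyp] by simp
    moreover have "lle M (M \<cdot> r) ?w" using lle_trans[OF M lle_mult[OF a] lle_le[OF M mw]] .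
    hence "lle M (sup (M \<cdot> r) ?w) ?w" using lle_sup[OF M] lle_le[OF M] by blast
    ultimately have "lle M ?y ?w" using lle_trans[OF M] by blast
    thus ?thesis using insert by simp
  qed
  have c: "lle M r z"
  proof -
    have "lle M (M \<cdot> ?y) (M \<cdot> z)" using lle_mult[OF b] .
    hence "lle M (M \<cdot> ?y) z" using lle_trans[OF M _ lle_le[OF M le_l]] by (metis comm)
    hence "lle M ?w z" using lle_sup[OF M lle_le[OF M]] by blast
    thus ?thesis using lle_trans[OF M a] by blast
  qed
  show ?case using lle_sup[OF M c b] by simp
qed

lemma GN_all:
  assumes M: "maxel M" and "lle M y (sup z (M \<cdot> y))" shows "lle M y z"
proof -
  obtain F where "finite F" "\<forall>p\<in>F. principal m p" "y = Sup F" using fin_dec by blast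
  thus ?thesis using GN[OF M] assms(2) by blast
qed

lemma Msharp: assumes "sharp m" "maxel M" "M \<cdot> y \<le> b"
  shows "y \<le> b \<or> (\<exists>B. y \<le> B \<and> b = M \<cdot> B)"
proof -
  obtain b1 b2 where "M \<le> b1" "y \<le> b2" "b = b1 \<cdot> b2" using assms(1,3) unfolding sharp_def by blast
  moreover have "b1 = M \<or> b1 = top" using assms(2) `M \<le> b1` unfolding maxel_def by blast
  ultimately show ?thesis using unit_l by auto
qed

lemma M_loc_principal: assumes sh: "sharp m" and M: "maxel M"
  shows "\<exists>r. principal m r \<and> r \<le> M \<and> lle M M r"
proof -
  obtain F where F: "finite F" "\<forall>p\<in>F. principal m p" "M = Sup F" using fin_dec by blast
  show ?thesis
  proof (cases "\<forall>r\<in>F. r \<le> M \<cdot> M")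
    case True
    hence "M \<le> M \<cdot> M" using F(3) by (simp add: Sup_least)
    hence "lle M M (sup bot (M \<cdot> M))" using lle_le[OF M] by simp
    hence "lle M M bot" using GN_all[OF M] by blast
    thus ?thesis using principal_bot by (intro exI[of _ bot]) auto
  next
    case False
    then obtain r where r: "r \<in> F" "\<not> r \<le> M \<cdot> M" by blast
    have rM: "r \<le> M" using r(1) F(3) by (simp add: Sup_upper)
    have key: "lle M M r" if "M \<le> sup r (M \<cdot> M)"
      using GN_all[OF M lle_le[OF M that]] .
    have "M \<cdot> M \<le> sup r (M \<cdot> M)" by simp
    from Msharp[OF sh M this] have "M \<le> sup r (M \<cdot> M)"
    proof
      assume "\<exists>B. M \<le> B \<and> sup r (M \<cdot> M) = M \<cdot> B"
      then obtain B where B: "M \<le> B" "sup r (M \<cdot> M) = M \<cdot> B" by blast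
      have "B = M \<or> B = top" using M B(1) unfolding maxel_def by blast
      thus ?thesis
      proof
        assume "B = M" thus ?thesis using B r(2) by (metis sup.cobounded1)
      next
        assume "B = top" thus ?thesis using B unit_r by simp
      qed
    qed
    thus ?thesis using key rM F(2) r(1) by blast
  qed
qed

lemma loc_power:
  assumes M: "maxel M" and r: "principal m r" "r \<le> M" "lle M M r"
  shows "lle M p bot \<or> (\<exists>k. lle M p (pw r k) \<and> lle M (pw r k) p)"
proof (cases "p \<le> M")
  case False
  have "lle M p (pw r 0)" using lle_le[OF M] by (simp add: pw_0)
  moreover have "lle M (pw r 0) p" unfolding lle_def using False by (intro exI[of _ p]) (simp add: pw_0 unit_r)
  ultimately show ?thesis by blast
next
  case pM: True
  define c where "c k = ((\<lambda>y. colon m y r) ^^ k) p" for k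
  have c0: "c 0 = p" by (simp add: c_def)
  have cS: "c (Suc k) = colon m (c k) r" for k by (simp add: c_def)
  have cinc: "c k \<le> c (Suc k)" for k unfolding cS by (simp add: colon_iff le_l)
  have pc: "p \<le> c k" for k
  proof (induction k)
    case 0 thus ?case by (simp add: c0)
  next
    case (Suc k) thus ?case using cinc[of k] by simp
  qed
  have cB: "pw r k \<cdot> c k \<le> p" for k
  proof (induction k)
    case 0 thus ?case by (simp add: c0 pw_0 unit_l)
  next
    case (Suc k)
    have "pw r (Suc k) \<cdot> c (Suc k) = pw r k \<cdot> (c (Suc k) \<cdot> r)" by (metis pw_Suc assoc comm)
    also have "\<dots> \<le> pw r k \<cdot> c k" by (rule mono_r) (simp add: cS colon_mult)
    finally show ?case using Suc by simp
  qed
  have cstep: "lle M (c k) (c (Suc k) \<cdot> r)" if "c k \<le> M" for k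
  proof -
    have "lle M (c k) r" using lle_trans[OF M lle_le[OF M that] r(3)] .
    then obtain s where s: "\<not> s \<le> M" "s \<cdot> c k \<le> r" unfolding lle_def by blast
    have "s \<cdot> c k \<le> inf (c k) r" using s(2) by (simp add: le_r)
    also have "\<dots> = c (Suc k) \<cdot> r" using wmp[OF r(1)] cS by simp
    finally show ?thesis using s(1) unfolding lle_def by blast
  qed
  have cA: "(\<forall>j<k. c j \<le> M) \<longrightarrow> lle M p (pw r k \<cdot> c k)" for k
  proof (induction k)
    case 0 thus ?case using lle_le[OF M] by (simp add: c0 pw_0 unit_l)
  next
    case (Suc k)
    show ?case
    proof
      assume h: "\<forall>j<Suc k. c j \<le> M"
      hence 1: "lle M p (pw r k \<cdot> c k)" using Suc by simp
      have "lle M (pw r k \<cdot> c k) (pw r k \<cdot> (c (Suc k) \<cdot> r))" using lle_mult[OF cstep] h by simp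
      also have "pw r k \<cdot> (c (Suc k) \<cdot> r) = pw r (Suc k) \<cdot> c (Suc k)" by (metis pw_Suc assoc comm)
      finally show "lle M p (pw r (Suc k) \<cdot> c (Suc k))" using lle_trans[OF M 1] by simp
    qed
  qed
  show ?thesis
  proof (cases "\<exists>k. \<not> c k \<le> M")
    case True
    then obtain k where k: "\<not> c k \<le> M" "\<forall>j<k. \<not> \<not> c j \<le> M" using exists_least_iff[of "\<lambda>k. \<not> c k \<le> M"] by blast
    have "lle M p (pw r k)" using cA[of k] k(2) lle_trans[OF M _ lle_le[OF M le_l]] by auto
    moreover have "lle M (pw r k) p" unfolding lle_def using k(1) cB[of k] by (metis comm)
    ultimately show ?thesis by blast
  next
    case False
    obtain N where N: "c (Suc N) \<le> c N" using acc[of c] cinc by blast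
    have "lle M (c N) (c (Suc N) \<cdot> r)" using cstep False by blast
    moreover have "c (Suc N) \<cdot> r \<le> sup bot (M \<cdot> c N)"
      using N r(2) by (simp add: comm mono2)
    ultimately have "lle M (c N) bot" using GN_all[OF M] lle_trans[OF M _ lle_le[OF M]] by blast
    thus ?thesis using lle_trans[OF M lle_le[OF M pc]] by blast
  qed
qed

lemma loc_compare: assumes sh: "sharp m" and M: "maxel M" shows "lle M p q \<or> lle M q p"
proof -
  obtain r where r: "principal m r" "r \<le> M" "lle M M r" using M_loc_principal[OF sh M] by blast
  note P = loc_power[OF M r(1) r(2) r(3)]
  have lb: "lle M a b" if "lle M a bot" for a b using lle_trans[OF M that lle_le[OF M]] by simp
  show ?thesis
  proof (cases "lle M p bot \<or> lle M q bot")
    case True thus ?thesis using lb by blast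
  next
    case False
    then obtain k j where k: "lle M p (pw r k)" "lle M (pw r k) p" and j: "lle M q (pw r j)" "lle M (pw r j) q"
      using P[of p] P[of q] by blast
    show ?thesis
    proof (cases "j \<le> k")
      case True
      hence "lle M (pw r k) (pw r j)" using lle_le[OF M pw_anti] by blast
      thus ?thesis using k j lle_trans[OF M] by blast
    next
      case False
      hence "lle M (pw r j) (pw r k)" using lle_le[OF M pw_anti] by simp
      thus ?thesis using k j lle_trans[OF M] by blast
    qed
  qed
qed

lemma fin_loc: assumes sh: "sharp m" and M: "maxel M" and "finite F" "F \<noteq> {}"
  shows "\<exists>p\<in>F. lle M (Sup F) p"
  using assms(3,4)
proof (induction F rule: finite_ne_induct)
  case (singleton x) thus ?case using lle_le[OF M] by simp
next
  case (insert q F)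
  then obtain p where p: "p \<in> F" "lle M (Sup F) p" by blast
  show ?case
  proof (cases "lle M q p")
    case True
    thus ?thesis using lle_sup[OF M True p(2)] p(1) by auto
  next
    case False
    hence "lle M p q" using loc_compare[OF sh M] by blast
    hence "lle M (Sup F) q" using lle_trans[OF M p(2)] by blast
    thus ?thesis using lle_sup[OF M lle_le[OF M order_refl]] by auto
  qed
qed

lemma sharp_principal: assumes sh: "sharp m" shows "principal m x"
proof (rule local_global)
  fix M assume M: "maxel M"
  obtain F where F: "finite F" "\<forall>p\<in>F. principal m p" "x = Sup F" using fin_dec by blast
  show "\<exists>p. principal m p \<and> p \<le> x \<and> lle M x p"
  proof (cases "F = {}")
    case True thus ?thesis using F principal_bot lle_le[OF M] by auto
  next
    case False
    then obtain p where "p \<in> F" "lle M (Sup F) p" using fin_loc[OF sh M F(1)] by blast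
    thus ?thesis using F by (auto intro: Sup_upper)
  qed
qed

end

theorem corollary2p7:
  fixes m :: "'a::complete_lattice \<Rightarrow> 'a \<Rightarrow> 'a"
  assumes "C_lattice m" and "weak_noetherian m"
  shows "sharp m \<longleftrightarrow> (\<forall>x::'a. principal m x)"
proof -
  interpret wnl m using assms unfolding wnl_def wnl_axioms_def mlat_def C_lattice_def by blast
  show ?thesis using sharp_principal sharp_all_principal by blast
qed

end
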